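(* Let $k=\delta n$ with $\delta = \omega(\log^{-1/3} n)$, let $G = (X\dot\cup Y,E)$ be a $k$-regular bipartite graph on $2n$ vertices, let $(S,T)$ be a cut of $G$, and let $V' = V\setminus \Gamma(S,T)$. Let $G_1\sim G(p_1)$ with $p_1 = \frac{\log n - \log\log\log\log n}{k}$. Then, w.v.h.p., every $x\in V'$ satisfies $\deg^{\mathrm{Cr}}_{G_1}(x)\le 30$.
   Context: $V = X\cup Y$. A cut is a pair $(S,T)$ with $S\subseteq X$, $T\subseteq Y$; cross edges w.r.t. $(S,T)$ are edges joining $S$ to $Y\setminus T$ or $X\setminus S$ to $T$. $\deg^{\mathrm{Cr}}_{H}(x)$ denotes the number of cross edges of the subgraph $H$ incident to $x$. $\Gamma(S,T) = \{x\in V : \deg^{\mathrm{Cr}}_{G}(x) \ge n^{-1/20}k\}$. $G(p)$ retains each edge of $G$ independently with probability $p$. A sequence of events $A_n$ holds with very high probability (w.v.h.p.) if $\log(\mathbb P[A_n^c]) = -\Omega(\log n)$. *)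

theory Defs
  imports "HOL-Probability.Probability" "HOL-Library.Landau_Symbols"
begin

text \<open>A bipartite graph with sides X = {0..<n} and Y = {0..<n} (two disjoint labelled copies)
  is given by its edge set E, a set of pairs (x,y) with x in X, y in Y.\<close>

type_synonym vertex = "nat + nat"

definition bip_vertices :: "nat \<Rightarrow> vertex set" where
  "bip_vertices n = Inl ` {..<n} \<union> Inr ` {..<n}"

definition k_regular_bipartite :: "nat \<Rightarrow> nat \<Rightarrow> (nat \<times> nat) set \<Rightarrow> bool" where
  "k_regular_bipartite n k E \<longleftrightarrow>
     E \<subseteq> {..<n} \<times> {..<n} \<and>
     (\<forall>x<n. card {y. (x, y) \<in> E} = k) \<and>
     (\<forall>y<n. card {x. (x, y) \<in> E} = k)"

definition is_cut :: "nat \<Rightarrow> nat set \<Rightarrow> nat set \<Rightarrow> bool" where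
  "is_cut n S T \<longleftrightarrow> S \<subseteq> {..<n} \<and> T \<subseteq> {..<n}"

definition cross_edge :: "nat set \<Rightarrow> nat set \<Rightarrow> nat \<times> nat \<Rightarrow> bool" where
  "cross_edge S T e \<longleftrightarrow> (fst e \<in> S \<and> snd e \<notin> T) \<or> (fst e \<notin> S \<and> snd e \<in> T)"

fun incident :: "vertex \<Rightarrow> nat \<times> nat \<Rightarrow> bool" where
  "incident (Inl x) e \<longleftrightarrow> fst e = x"
| "incident (Inr y) e \<longleftrightarrow> snd e = y"

definition cross_deg :: "nat set \<Rightarrow> nat set \<Rightarrow> (nat \<times> nat) set \<Rightarrow> vertex \<Rightarrow> nat" where
  "cross_deg S T H v = card {e \<in> H. cross_edge S T e \<and> incident v e}"

definition Gamma :: "nat \<Rightarrow> nat \<Rightarrow> (nat \<times> nat) set \<Rightarrow> nat set \<Rightarrow> nat set \<Rightarrow> vertex set" where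
  "Gamma n k E S T = {v \<in> bip_vertices n. real (cross_deg S T E v) \<ge> real n powr (-1/20) * real k}"

text \<open>Probability that the random subgraph G(p) (each edge of E kept independently
  with probability p) has property P, where P is a property of the retained edge set.\<close>
definition subgraph_prob :: "(nat \<times> nat) set \<Rightarrow> real \<Rightarrow> ((nat \<times> nat) set \<Rightarrow> bool) \<Rightarrow> real" where
  "subgraph_prob E p P =
     measure_pmf.prob (Pi_pmf E False (\<lambda>_. bernoulli_pmf p)) {f. P {e \<in> E. f e}}"

end

theory Submission imports Defs "HOL-Real_Asymp.Real_Asymp" begin

lemma prob_all_kept:
  assumes fin: "finite E" and AE: "A \<subseteq> E" and p: "0 \<le> p" "p \<le> 1"
  shows "measure_pmf.prob (Pi_pmf E False (\<lambda>_. bernoulli_pmf p)) {f. \<forall>e\<in>A. f e} = p ^ card A"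
proof -
  have eq: "{f. \<forall>e\<in>A. f e} = Pi E (\<lambda>e. if e \<in> A then {True} else UNIV)"
    using AE by (auto simp: Pi_def)
  have "measure_pmf.prob (Pi_pmf E False (\<lambda>_. bernoulli_pmf p)) {f. \<forall>e\<in>A. f e}
      = (\<Prod>e\<in>E. measure_pmf.prob (bernoulli_pmf p) (if e \<in> A then {True} else UNIV))"
    unfolding eq by (rule measure_Pi_pmf_Pi[OF fin])
  also have "\<dots> = (\<Prod>e\<in>E. if e \<in> A then p else 1)"
    by (rule prod.cong) (auto simp: measure_pmf_single p)
  also have "\<dots> = p ^ card A"
    using prod.If_cases[OF fin, of "\<lambda>e. e \<in> A" "\<lambda>_. p" "\<lambda>_. 1"] AE
    by (simp add: Int_absorb1 Collect_mem_eq)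
  finally show ?thesis .
qed

lemma vertex_bound:
  assumes fin: "finite E" and DE: "D \<subseteq> E" and p: "0 \<le> p" "p \<le> 1"
  shows "measure_pmf.prob (Pi_pmf E False (\<lambda>_. bernoulli_pmf p)) {f. 30 < card {e\<in>D. f e}}
         \<le> (real (card D) * p) ^ 31"
proof -
  let ?M = "Pi_pmf E False (\<lambda>_. bernoulli_pmf p)"
  let ?F = "{A. A \<subseteq> D \<and> card A = 31}"
  have finD: "finite D" using fin DE finite_subset by blast
  have sub: "{f. 30 < card {e\<in>D. f e}} \<subseteq> (\<Union>A\<in>?F. {f. \<forall>e\<in>A. f e})"
  proof
    fix f assume "f \<in> {f. 30 < card {e\<in>D. f e}}"
    hence "31 \<le> card {e\<in>D. f e}" by simp
    then obtain A where "A \<subseteq> {e\<in>D. f e}" "card A = 31"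
      by (rule obtain_subset_with_card_n)
    thus "f \<in> (\<Union>A\<in>?F. {f. \<forall>e\<in>A. f e})" by blast
  qed
  have finF: "finite ?F" by (rule finite_subset[of _ "Pow D"]) (use finD in auto)
  have "measure_pmf.prob ?M {f. 30 < card {e\<in>D. f e}} \<le> measure_pmf.prob ?M (\<Union>A\<in>?F. {f. \<forall>e\<in>A. f e})"
    by (rule measure_pmf.finite_measure_mono[OF sub]) simp
  also have "\<dots> \<le> (\<Sum>A\<in>?F. measure_pmf.prob ?M {f. \<forall>e\<in>A. f e})"
    by (rule measure_pmf.finite_measure_subadditive_finite[OF finF]) simp
  also have "\<dots> = (\<Sum>A\<in>?F. p ^ 31)"
  proof (rule sum.cong)
    fix A assume "A \<in> ?F"
    hence AE: "A \<subseteq> E" and cA: "card A = 31" using DE by auto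
    show "measure_pmf.prob ?M {f. \<forall>e\<in>A. f e} = p ^ 31"
      using prob_all_kept[OF fin AE p] cA by simp
  qed simp
  also have "\<dots> = real (card D choose 31) * p ^ 31"
    using n_subsets[OF finD, of 31] by simp
  also have "\<dots> \<le> real (card D ^ 31) * p ^ 31"
  proof (rule mult_right_mono)
    show "real (card D choose 31) \<le> real (card D ^ 31)"
      by (cases "31 \<le> card D") (auto simp: binomial_le_pow binomial_eq_0)
  qed (use p in simp)
  also have "\<dots> = (real (card D) * p) ^ 31" by (simp add: power_mult_distrib)
  finally show ?thesis .
qed

lemma card_bip: "card (bip_vertices n) \<le> 2 * n"
proof -
  have "card (bip_vertices n) \<le> card (Inl ` {..<n} :: vertex set) + card (Inr ` {..<n} :: vertex set)"
    unfolding bip_vertices_def by (rule card_Un_le)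
  also have "\<dots> \<le> n + n" by (intro add_mono) (metis card_image_le card_lessThan finite_lessThan)+
  finally show ?thesis by simp
qed

lemma finite_bip: "finite (bip_vertices n)" unfolding bip_vertices_def by simp

theorem lemma3p4:
  fixes k :: "nat \<Rightarrow> nat"
    and E :: "nat \<Rightarrow> (nat \<times> nat) set"
    and S T :: "nat \<Rightarrow> nat set"
  assumes delta: "(\<lambda>n. real (k n) / real n) \<in> \<omega>(\<lambda>n. ln (real n) powr (-1/3))"
    and reg: "\<And>n. k_regular_bipartite n (k n) (E n)"
    and cut: "\<And>n. is_cut n (S n) (T n)"
  shows "\<exists>c>0. \<forall>\<^sub>F n in at_top.
           subgraph_prob (E n) ((ln (real n) - ln (ln (ln (ln (real n))))) / real (k n))
             (\<lambda>H. \<exists>x \<in> bip_vertices n - Gamma n (k n) (E n) (S n) (T n).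
                     cross_deg (S n) (T n) H x > 30)
           \<le> real n powr (-c)"
proof (intro exI[of _ "1/2"] conjI)
  show "(0::real) < 1/2" by simp
  have ev1: "\<forall>\<^sub>F n in at_top. norm (real (k n) / real n) \<ge> 1 * norm (ln (real n) powr (-1/3))"
    using delta by (rule smallomegaD)
  have ev2: "\<forall>\<^sub>F n::nat in at_top. ln (ln (ln (ln (real n)))) \<ge> 0" by real_asymp
  have ev3: "\<forall>\<^sub>F n::nat in at_top. ln (ln (ln (ln (real n)))) \<le> ln (real n)" by real_asymp
  have ev4: "\<forall>\<^sub>F n::nat in at_top. ln (real n) * ln (real n) powr (1/3) / real n \<le> 1" by real_asymp
  have ev5: "\<forall>\<^sub>F n::nat in at_top. 2 * real n * (real n powr (-1/20) * ln (real n))^31 \<le> real n powr (-1/2)" by real_asymp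
  have ev6: "\<forall>\<^sub>F n::nat in at_top. n \<ge> 4" by (rule eventually_ge_at_top)
  show "\<forall>\<^sub>F n in at_top.
           subgraph_prob (E n) ((ln (real n) - ln (ln (ln (ln (real n))))) / real (k n))
             (\<lambda>H. \<exists>x \<in> bip_vertices n - Gamma n (k n) (E n) (S n) (T n).
                     cross_deg (S n) (T n) H x > 30)
           \<le> real n powr (-(1/2))"
    using ev1 ev2 ev3 ev4 ev5 ev6
  proof eventually_elim
    case (elim n)
    define L where "L = ln (real n)"
    define p where "p = (ln (real n) - ln (ln (ln (ln (real n))))) / real (k n)"
    define V' where "V' = bip_vertices n - Gamma n (k n) (E n) (S n) (T n)"
    define D where "D = (\<lambda>x. {e \<in> E n. cross_edge (S n) (T n) e \<and> incident x e})"
    have n3: "real n \<ge> 4" using elim(6) by simp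
    have L1: "L > 1"
    proof -
      have "exp 1 < real n" using exp_le n3 by linarith
      thus ?thesis using ln_less_cancel_iff[of "exp 1" "real n"] n3 by (simp add: L_def)
    qed
    have Lpos: "L powr (1/3) > 0" using L1 by simp
    have "real (k n) / real n \<ge> L powr (-1/3)" using elim(1) L1 unfolding L_def by simp
    hence "real (k n) \<ge> real n * L powr (-1/3)" using n3 by (simp add: field_simps)
    also have "real n * L powr (-1/3) = real n / L powr (1/3)"
      using L1 by (simp add: powr_minus_divide)
    finally have kge: "real (k n) \<ge> real n / L powr (1/3)" .
    have kpos: "real (k n) > 0" using kge n3 Lpos by (smt (verit) divide_pos_pos)
    have p0: "0 \<le> p" unfolding p_def using elim(3) kpos by simp
    have pL: "p \<le> L / real (k n)" unfolding p_def L_def using elim(2) kpos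
      by (simp add: divide_right_mono)
    have "L / real (k n) \<le> L / (real n / L powr (1/3))"
    proof (rule divide_left_mono)
      show "0 < real (k n) * (real n / L powr (1/3))" using kpos n3 Lpos by simp
    qed (use kge L1 in auto)
    also have "\<dots> = L * L powr (1/3) / real n" by simp
    also have "\<dots> \<le> 1" using elim(4) unfolding L_def .
    finally have p1: "p \<le> 1" using pL by simp
    have finE: "finite (E n)"
      using reg[of n] unfolding k_regular_bipartite_def by (meson finite_SigmaI finite_lessThan finite_subset)
    have DE: "D x \<subseteq> E n" for x unfolding D_def by auto
    have Dbound: "real (card (D x)) * p \<le> real n powr (-1/20) * L" if "x \<in> V'" for x
    proof -
      have "real (card (D x)) < real n powr (-1/20) * real (k n)"
        using that unfolding V'_def Gamma_def D_def cross_deg_def by auto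
      hence "real (card (D x)) * p \<le> real n powr (-1/20) * real (k n) * (L / real (k n))"
        using p0 pL by (intro mult_mono) auto
      also have "\<dots> = real n powr (-1/20) * L" using kpos by simp
      finally show ?thesis .
    qed
    let ?M = "Pi_pmf (E n) False (\<lambda>_. bernoulli_pmf p)"
    have seteq: "{f. \<exists>x \<in> V'. cross_deg (S n) (T n) {e \<in> E n. f e} x > 30}
        = (\<Union>x\<in>V'. {f. 30 < card {e \<in> D x. f e}})"
    proof -
      have "\<And>f x. {e \<in> {e \<in> E n. f e}. cross_edge (S n) (T n) e \<and> incident x e} = {e \<in> D x. f e}"
        unfolding D_def by auto
      thus ?thesis unfolding cross_deg_def by auto
    qed
    have finV: "finite V'" unfolding V'_def using finite_bip by simp
    have "subgraph_prob (E n) p (\<lambda>H. \<exists>x \<in> V'. cross_deg (S n) (T n) H x > 30)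
        = measure_pmf.prob ?M (\<Union>x\<in>V'. {f. 30 < card {e \<in> D x. f e}})"
      unfolding subgraph_prob_def seteq[symmetric] by simp
    also have "\<dots> \<le> (\<Sum>x\<in>V'. measure_pmf.prob ?M {f. 30 < card {e \<in> D x. f e}})"
      by (rule measure_pmf.finite_measure_subadditive_finite[OF finV]) simp
    also have "\<dots> \<le> (\<Sum>x\<in>V'. (real n powr (-1/20) * L) ^ 31)"
    proof (rule sum_mono)
      fix x assume xV: "x \<in> V'"
      have "measure_pmf.prob ?M {f. 30 < card {e \<in> D x. f e}} \<le> (real (card (D x)) * p) ^ 31"
        by (rule vertex_bound[OF finE DE p0 p1])
      also have "\<dots> \<le> (real n powr (-1/20) * L) ^ 31"
        using Dbound[OF xV] p0 by (intro power_mono) auto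
      finally show "measure_pmf.prob ?M {f. 30 < card {e \<in> D x. f e}} \<le> (real n powr (-1/20) * L) ^ 31" .
    qed
    also have "\<dots> = real (card V') * (real n powr (-1/20) * L) ^ 31" by simp
    also have "\<dots> \<le> (2 * real n) * (real n powr (-1/20) * L) ^ 31"
    proof (rule mult_right_mono)
      have "card V' \<le> card (bip_vertices n)" unfolding V'_def
        by (rule card_mono[OF finite_bip]) auto
      also have "\<dots> \<le> 2 * n" by (rule card_bip)
      finally show "real (card V') \<le> 2 * real n" by linarith
    qed (use L1 in simp)
    also have "\<dots> \<le> real n powr (-1/2)" using elim(5) unfolding L_def .
    finally show ?case unfolding p_def V'_def by simp
  qed
qed
end
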